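(* Let $D$ be a connected ribbon with $n$ boxes and $\alpha_1(D)=1$. If $c(D)>1/2+n/4$, then $\mathfrak r_D$ is not $p$-positive.
   Context: Boxes $(i,j)$ are indexed by row $i$ (top to bottom) and column $j$. A connected ribbon $D$ of composition $\alpha(D)=(\alpha_1(D),\dots,\alpha_\ell(D))$ has $\alpha_r(D)$ consecutive boxes in row $r$, with the leftmost box of row $r$ directly above the rightmost box of row $r+1$. A box $(i,j)$ of $D$ is a corner if $(i-1,j)\in D$ and $(i+1,j)\notin D$; $c(D)$ is the number of corners. $\mathfrak r_D=\sum_T x^{c(T)}$ over fillings $T$ of $D$ with letters of $\{1'<1<2'<2<\cdots\}$ having rows and columns weakly increasing, at most one unmarked $k$ per column and at most one marked $k'$ per row; $c(T)_i$ counts entries $i$ or $i'$. A symmetric function is $p$-positive if all its coefficients in the power sum basis are nonnegative. *)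

theory Defs
  imports Complex_Main
begin

text \<open>A composition: nonempty list of positive parts (row lengths, top to bottom).\<close>
definition is_composition :: "nat list \<Rightarrow> bool" where
  "is_composition \<alpha> \<longleftrightarrow> \<alpha> \<noteq> [] \<and> 0 \<notin> set \<alpha>"

text \<open>Row i (1-based, top to bottom) of the ribbon occupies columns
  ribbon_start i, ..., ribbon_start i + alpha_i - 1; the bottom row starts in column 1 and
  the leftmost box of row r lies directly above the rightmost box of row r+1.\<close>
definition ribbon_start :: "nat list \<Rightarrow> nat \<Rightarrow> nat" where
  "ribbon_start \<alpha> i = 1 + (\<Sum>r\<in>{i+1..length \<alpha>}. \<alpha> ! (r - 1) - 1)"

definition ribbon :: "nat list \<Rightarrow> (nat \<times> nat) set" where
  "ribbon \<alpha> = {(i, j). 1 \<le> i \<and> i \<le> length \<alpha> \<and>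
      ribbon_start \<alpha> i \<le> j \<and> j < ribbon_start \<alpha> i + \<alpha> ! (i - 1)}"

definition corners :: "(nat \<times> nat) set \<Rightarrow> nat" where
  "corners D = card {(i, j). (i, j) \<in> D \<and> 1 \<le> i \<and> (i - 1, j) \<in> D \<and> (i + 1, j) \<notin> D}"

text \<open>Letters 1' < 1 < 2' < 2 < ... are encoded by positive naturals:
  2k-1 encodes k' (marked), 2k encodes k (unmarked); the order is the order on nat.\<close>
definition letter :: "nat \<Rightarrow> nat" where
  "letter v = (v + 1) div 2"

definition marked_filling :: "(nat \<times> nat) set \<Rightarrow> (nat \<times> nat \<Rightarrow> nat) \<Rightarrow> bool" where
  "marked_filling D T \<longleftrightarrow>
     (\<forall>b\<in>D. 1 \<le> T b) \<and> (\<forall>b. b \<notin> D \<longrightarrow> T b = 0) \<and>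
     (\<forall>i j. (i, j) \<in> D \<and> (i, j + 1) \<in> D \<longrightarrow> T (i, j) \<le> T (i, j + 1)) \<and>
     (\<forall>i j. (i, j) \<in> D \<and> (i + 1, j) \<in> D \<longrightarrow> T (i, j) \<le> T (i + 1, j)) \<and>
     (\<forall>i i' j. (i, j) \<in> D \<and> (i', j) \<in> D \<and> i \<noteq> i' \<and> even (T (i, j)) \<longrightarrow> T (i, j) \<noteq> T (i', j)) \<and>
     (\<forall>i j j'. (i, j) \<in> D \<and> (i, j') \<in> D \<and> j \<noteq> j' \<and> odd (T (i, j)) \<longrightarrow> T (i, j) \<noteq> T (i, j'))"

definition content :: "(nat \<times> nat) set \<Rightarrow> (nat \<times> nat \<Rightarrow> nat) \<Rightarrow> nat \<Rightarrow> nat" where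
  "content D T k = card {b \<in> D. letter (T b) = k}"

text \<open>Coefficient of the monomial x^a = x_1^{a 1} x_2^{a 2} ... in r_D.\<close>
definition rcoeff :: "(nat \<times> nat) set \<Rightarrow> (nat \<Rightarrow> nat) \<Rightarrow> nat" where
  "rcoeff D a = card {T. marked_filling D T \<and> (\<forall>k\<ge>1. content D T k = a k)}"

definition is_partition :: "nat list \<Rightarrow> bool" where
  "is_partition la \<longleftrightarrow> sorted_wrt (\<ge>) la \<and> 0 \<notin> set la"

text \<open>Coefficient of x^a in p_lambda = prod_j (x_1^{lambda_j} + x_2^{lambda_j} + ...).\<close>
definition pcoeff :: "nat list \<Rightarrow> (nat \<Rightarrow> nat) \<Rightarrow> nat" where
  "pcoeff la a = card {f. length f = length la \<and> (\<forall>i\<in>set f. 1 \<le> i) \<and>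
      (\<forall>k\<ge>1. (\<Sum>j\<in>{j. j < length la \<and> f ! j = k}. la ! j) = a k)}"

text \<open>A formal power series in x_1, x_2, ... given by its monomial coefficients F
  (indexed by exponent vectors a with a 0 = 0 and finite support) is p-positive if it is
  a nonnegative (finite) linear combination of power sum symmetric functions p_lambda.\<close>
definition p_positive :: "((nat \<Rightarrow> nat) \<Rightarrow> nat) \<Rightarrow> bool" where
  "p_positive F \<longleftrightarrow> (\<exists>c :: nat list \<Rightarrow> real.
      finite {la. c la \<noteq> 0} \<and> (\<forall>la. c la \<noteq> 0 \<longrightarrow> is_partition la) \<and> (\<forall>la. 0 \<le> c la) \<and>
      (\<forall>a. a 0 = 0 \<and> finite {k. a k \<noteq> 0} \<longrightarrow>
         real (F a) = (\<Sum>la\<in>{la. c la \<noteq> 0}. c la * real (pcoeff la a))))"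

end

theory Submission
  imports Defs "HOL-Library.FuncSet"
begin

definition fb :: "nat list \<Rightarrow> nat \<times> nat \<Rightarrow> bool" where
  "fb \<alpha> b \<longleftrightarrow> snd b = ribbon_start \<alpha> (fst b) \<and> fst b < length \<alpha>"

definition gf :: "nat list \<Rightarrow> nat \<times> nat \<Rightarrow> nat" where
  "gf \<alpha> b = (if b \<in> ribbon \<alpha> then (if fb \<alpha> b then 1 else 2) else 0)"

definition GF :: "nat list \<Rightarrow> nat \<times> nat \<Rightarrow> nat \<Rightarrow> nat \<Rightarrow> nat \<Rightarrow> nat \<times> nat \<Rightarrow> nat" where
  "GF \<alpha> m u v w b = (if b \<notin> ribbon \<alpha> then 0 else if b = m then u
     else if b = (fst m - 1, snd m) then v else if b = (length \<alpha>, 1) then w else gf \<alpha> b)"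

definition CS :: "nat list \<Rightarrow> (nat \<times> nat) set" where
  "CS \<alpha> = {(i, j). (i, j) \<in> ribbon \<alpha> \<and> 1 \<le> i \<and> (i - 1, j) \<in> ribbon \<alpha> \<and> (i + 1, j) \<notin> ribbon \<alpha>}"

context
  fixes \<alpha> :: "nat list"
  assumes comp: "is_composition \<alpha>"
begin

private abbreviation "s \<equiv> ribbon_start \<alpha>"
private abbreviation "l \<equiv> length \<alpha>"
private abbreviation "D \<equiv> ribbon \<alpha>"

lemma pos_al: "i < l \<Longrightarrow> 1 \<le> \<alpha> ! i"
  using comp unfolding is_composition_def
  by (metis less_one not_le nth_mem)

lemma memD: "(i, j) \<in> D \<longleftrightarrow> 1 \<le> i \<and> i \<le> l \<and> s i \<le> j \<and> j < s i + \<alpha> ! (i - 1)"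
  unfolding ribbon_def by auto

lemma s_l: "s l = 1"
  unfolding ribbon_start_def by simp

lemma s_ge1: "1 \<le> s i"
  unfolding ribbon_start_def by simp

lemma s_step: assumes "1 \<le> i" "i < l" shows "s i = s (i+1) + \<alpha> ! i - 1"
proof -
  have "{i+1..l} = insert (i+1) {i+2..l}" using assms by auto
  hence "s i = 1 + ((\<alpha> ! i - 1) + (\<Sum>r\<in>{i+2..l}. \<alpha> ! (r - 1) - 1))"
    unfolding ribbon_start_def by simp
  moreover have "s (i+1) = 1 + (\<Sum>r\<in>{i+2..l}. \<alpha> ! (r - 1) - 1)"
    unfolding ribbon_start_def by (simp add: numeral_2_eq_2)
  ultimately show ?thesis using pos_al[OF assms(2)] by simp
qed

lemma s_mono: "i \<le> i' \<Longrightarrow> s i' \<le> s i"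
  unfolding ribbon_start_def by (intro add_left_mono sum_mono2) auto

lemma finD: "finite D"
proof -
  have "D \<subseteq> {1..l} \<times> {..s 0 + Max (set \<alpha>)}"
  proof
    fix b assume "b \<in> D"
    then obtain i j where b: "b = (i,j)" and m: "(i,j) \<in> D" by (cases b) auto
    hence "1 \<le> i" "i \<le> l" "j < s i + \<alpha> ! (i-1)" using memD by auto
    moreover have "\<alpha> ! (i-1) \<le> Max (set \<alpha>)" using \<open>1 \<le> i\<close> \<open>i \<le> l\<close> by simp
    moreover have "s i \<le> s 0" by (rule s_mono) simp
    ultimately have "j \<le> s 0 + Max (set \<alpha>)" by linarith
    thus "b \<in> {1..l} \<times> {..s 0 + Max (set \<alpha>)}" using b \<open>1 \<le> i\<close> \<open>i \<le> l\<close> by auto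
  qed
  thus ?thesis by (rule finite_subset) auto
qed

lemma F1: "1 \<le> i \<Longrightarrow> i < l \<Longrightarrow> (i+1, s i) \<in> D"
  using s_step[of i] s_mono[of i "i+1"] pos_al[of i] by (auto simp: memD)

lemma H: "(i', j) \<in> D \<Longrightarrow> 2 \<le> i' \<Longrightarrow> j \<le> s (i' - 1)"
  using s_step[of "i'-1"] by (auto simp: memD)

lemma G1: "(i, j) \<in> D \<Longrightarrow> (i', j) \<in> D \<Longrightarrow> i < i' \<Longrightarrow> j = s i \<and> i < l"
proof -
  assume a: "(i, j) \<in> D" "(i', j) \<in> D" "i < i'"
  hence "j \<le> s (i'-1)" using H memD by auto
  moreover have "s (i'-1) \<le> s i" using a by (intro s_mono) auto
  ultimately show ?thesis using a memD by auto
qed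

lemma G2: "(i, j) \<in> D \<Longrightarrow> (i', j) \<in> D \<Longrightarrow> i \<le> k \<Longrightarrow> k \<le> i' \<Longrightarrow> (k, j) \<in> D"
proof -
  assume a: "(i, j) \<in> D" "(i', j) \<in> D" "i \<le> k" "k \<le> i'"
  show ?thesis
  proof (cases "k = i \<or> k = i'")
    case True thus ?thesis using a by auto
  next
    case False
    hence k: "i < k" "k < i'" using a by auto
    have j: "j = s i" using G1[OF a(1,2)] k by auto
    have "j \<le> s (i'-1)" using H a k memD by auto
    moreover have "s (i'-1) \<le> s (k-1)" using k by (intro s_mono) auto
    moreover have "s (k-1) = s k + \<alpha> ! (k-1) - 1" using s_step[of "k-1"] k a memD by auto
    moreover have "s k \<le> s i" using k by (intro s_mono) auto
    moreover have "1 \<le> \<alpha> ! (k-1)" using pos_al[of "k-1"] k a memD by auto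
    ultimately show ?thesis using j k a memD by auto
  qed
qed

lemma corner:
  assumes "m \<in> CS \<alpha>"
  shows "m \<in> D" "2 \<le> fst m" "snd m = s (fst m - 1)" "fst m - 1 < l" "fst m \<le> l"
    "(fst m - 1, snd m) \<in> D" "(fst m + 1, snd m) \<notin> D" "(fst m, snd m + 1) \<notin> D"
    "\<not> fb \<alpha> m" "fb \<alpha> (fst m - 1, snd m)"
proof -
  obtain i j where m: "m = (i,j)" by (cases m)
  have a: "(i,j) \<in> D" "(i-1,j) \<in> D" "(i+1,j) \<notin> D" using assms m unfolding CS_def by auto
  show "m \<in> D" using a m by simp
  have i2: "2 \<le> i" using a memD by auto
  thus "2 \<le> fst m" using m by simp
  have il: "i \<le> l" using a memD by auto
  thus "fst m \<le> l" using m by simp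
  have js: "j = s (i-1)" using G1[OF a(2) a(1)] i2 by auto
  thus "snd m = s (fst m - 1)" using m by simp
  show "fst m - 1 < l" using il i2 m by simp
  show "(fst m - 1, snd m) \<in> D" "(fst m + 1, snd m) \<notin> D" using a m by auto
  show "(fst m, snd m + 1) \<notin> D"
  proof
    assume "(fst m, snd m + 1) \<in> D"
    hence "j + 1 \<le> s (i-1)" using H[of i "j+1"] m i2 by auto
    thus False using js by simp
  qed
  show "\<not> fb \<alpha> m"
  proof
    assume "fb \<alpha> m"
    hence "j = s i" "i < l" using m fb_def by auto
    thus False using F1[of i] a i2 by auto
  qed
  show "fb \<alpha> (fst m - 1, snd m)" using js m i2 il unfolding fb_def by auto
qed

lemma b0D: "(l, 1) \<in> D" "\<not> fb \<alpha> (l, 1)"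
proof -
  have "l \<ge> 1" using comp unfolding is_composition_def by (cases \<alpha>) auto
  moreover have "1 \<le> \<alpha> ! (l-1)" using pos_al[of "l-1"] \<open>l \<ge> 1\<close> by simp
  ultimately show "(l, 1) \<in> D" using s_l by (auto simp: memD)
  show "\<not> fb \<alpha> (l, 1)" by (simp add: fb_def)
qed

lemma GF_val:
  assumes "b \<in> D"
  shows "GF \<alpha> m u v w b = (if b = m then u else if b = (fst m - 1, snd m) then v
     else if b = (l, 1) then w else if fb \<alpha> b then 1 else 2)"
  using assms unfolding GF_def gf_def by auto

lemma GF_filling:
  assumes m: "m \<in> CS \<alpha>" and u: "u \<in> {3,4}" and v: "v \<in> {1,2}" and w: "w \<in> {1,2}"
  shows "marked_filling D (GF \<alpha> m u v w)"
proof -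
  let ?T = "GF \<alpha> m u v w"
  let ?vb = "(fst m - 1, snd m)"
  note c = corner[OF m]
  note b0 = b0D
  have vbm: "?vb \<noteq> m" using c by (cases m) auto
  have vb0: "?vb \<noteq> (l,1)" using c by auto
  have m0: "m \<noteq> ?vb" using vbm by auto
  have val1: "snd b = s (fst b)" if "b \<in> D" "?T b = 1" for b
  proof -
    note gv = GF_val[OF that(1), of m u v w]
    consider "b = m" | "b \<noteq> m" "b = ?vb" | "b \<noteq> m" "b \<noteq> ?vb" "b = (l,1)"
      | "b \<noteq> m" "b \<noteq> ?vb" "b \<noteq> (l,1)" by blast
    then show ?thesis
    proof cases
      case 1 thus ?thesis using gv that u by auto
    next
      case 2 thus ?thesis using c(3) by simp
    next
      case 3 thus ?thesis using s_l by simp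
    next
      case 4 hence "fb \<alpha> b" using gv that by (cases "fb \<alpha> b") auto
      thus ?thesis unfolding fb_def by simp
    qed
  qed
  have range: "?T b \<in> {1,2,3,4}" if "b \<in> D" for b
    using GF_val[OF that(1), of m u v w] u v w by (simp only: split: if_splits) auto
  have val3: "b = m" if "b \<in> D" "?T b \<ge> 3" for b
  proof (rule ccontr)
    assume "b \<noteq> m"
    hence "?T b \<le> 2" using GF_val[OF that(1), of m u v w] v w by (simp only: split: if_splits) auto
    thus False using that by simp
  qed
  have row: "?T (i, j) \<le> ?T (i, j + 1)" if "(i, j) \<in> D" "(i, j + 1) \<in> D" for i j
  proof -
    have "(i,j) \<noteq> m" using that c by auto
    hence le2: "?T (i,j) \<le> 2" using GF_val[OF that(1), of m u v w] v w by (auto split: if_splits)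
    have "s i \<le> j" using that memD by auto
    hence nfb: "\<not> fb \<alpha> (i, j+1)" unfolding fb_def by auto
    have "(i, j+1) \<noteq> ?vb" using nfb c by auto
    moreover have "(i, j+1) \<noteq> (l, 1)" using s_ge1[of i] \<open>s i \<le> j\<close> by auto
    ultimately have "?T (i, j+1) \<ge> 2" using GF_val[OF that(2), of m u v w] nfb u by auto
    thus ?thesis using le2 by linarith
  qed
  have col: "?T (i, j) \<le> ?T (i + 1, j)" if "(i, j) \<in> D" "(i + 1, j) \<in> D" for i j
  proof -
    have f: "fb \<alpha> (i,j)" using G1[OF that] unfolding fb_def by auto
    hence "(i,j) \<noteq> m" "(i,j) \<noteq> (l,1)" using c b0 by auto
    show ?thesis
    proof (cases "(i,j) = ?vb")
      case True
      hence "(i+1,j) = m" using c by (cases m) auto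
      thus ?thesis using True GF_val[OF that(1), of m u v w] GF_val[OF that(2), of m u v w] u v vbm
        by auto
    next
      case False
      hence "?T (i,j) = 1" using GF_val[OF that(1), of m u v w] f \<open>(i,j) \<noteq> m\<close> \<open>(i,j) \<noteq> (l,1)\<close>
        by auto
      thus ?thesis using range[OF that(2)] by auto
    qed
  qed
  have colodd: "odd (?T (i, j))" if "(i, j) \<in> D" "(i', j) \<in> D" "i < i'" "?T (i,j) = ?T (i',j)" for i i' j
  proof -
    have f: "fb \<alpha> (i,j)" using G1[OF that(1,2,3)] unfolding fb_def by auto
    hence "(i,j) \<noteq> m" "(i,j) \<noteq> (l,1)" using c b0 by auto
    show ?thesis
    proof (cases "(i,j) = ?vb")
      case True
      have "i' = fst m"
      proof (rule ccontr)
        assume "i' \<noteq> fst m"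
        hence "fst m + 1 \<le> i'" using True that(3) c by auto
        hence "(fst m + 1, j) \<in> D" using G2[OF that(1,2)] True by auto
        thus False using c True by auto
      qed
      hence "(i',j) = m" using True by (cases m) auto
      hence "?T (i',j) = u" using GF_val[OF that(2), of m u v w] by auto
      moreover have "?T (i,j) = v" using True GF_val[OF that(1), of m u v w] vbm by auto
      ultimately show ?thesis using that(4) u v by auto
    next
      case False
      hence "?T (i,j) = 1" using GF_val[OF that(1), of m u v w] f \<open>(i,j) \<noteq> m\<close> \<open>(i,j) \<noteq> (l,1)\<close>
        by auto
      thus ?thesis by simp
    qed
  qed
  show ?thesis
    unfolding marked_filling_def
  proof (intro conjI allI impI ballI)
    show "1 \<le> ?T b" if "b \<in> D" for b using range[OF that] by auto
    show "?T b = 0" if "b \<notin> D" for b using that unfolding GF_def by auto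
    show "?T (i, j) \<le> ?T (i, j + 1)" if "(i, j) \<in> D \<and> (i, j + 1) \<in> D" for i j using row that by auto
    show "?T (i, j) \<le> ?T (i + 1, j)" if "(i, j) \<in> D \<and> (i + 1, j) \<in> D" for i j using col that by auto
    show "?T (i, j) \<noteq> ?T (i', j)" if "(i, j) \<in> D \<and> (i', j) \<in> D \<and> i \<noteq> i' \<and> even (?T (i, j))" for i i' j
    proof
      assume e: "?T (i, j) = ?T (i', j)"
      show False
      proof (cases "i < i'")
        case True thus False using colodd[of i j i'] that e by auto
      next
        case False
        hence "i' < i" using that by auto
        thus False using colodd[of i' j i] that e by auto
      qed
    qed
    show "?T (i, j) \<noteq> ?T (i, j')" if "(i, j) \<in> D \<and> (i, j') \<in> D \<and> j \<noteq> j' \<and> odd (?T (i, j))" for i j j'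
    proof
      assume e: "?T (i, j) = ?T (i, j')"
      have "?T (i,j) = 1 \<or> ?T (i,j) = 3" using range[of "(i,j)"] that by auto
      thus False
      proof
        assume "?T (i,j) = 1"
        thus False using val1[of "(i,j)"] val1[of "(i,j')"] that e by auto
      next
        assume "?T (i,j) = 3"
        thus False using val3[of "(i,j)"] val3[of "(i,j')"] that e by auto
      qed
    qed
  qed
qed

lemma content_pos: "b \<in> D \<Longrightarrow> letter (T b) = k \<Longrightarrow> 1 \<le> content D T k"
proof -
  assume a: "b \<in> D" "letter (T b) = k"
  have "finite {b \<in> D. letter (T b) = k}" using finD by simp
  moreover have "b \<in> {b \<in> D. letter (T b) = k}" using a by simp
  ultimately have "card {b \<in> D. letter (T b) = k} > 0" using card_gt_0_iff by blast
  thus ?thesis unfolding content_def by simp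
qed

lemma A1_le: "card {T. marked_filling D T \<and> (\<forall>k\<ge>1. content D T k = (if k = 1 then card D else 0))} \<le> 2"
proof -
  let ?A = "{T. marked_filling D T \<and> (\<forall>k\<ge>1. content D T k = (if k = 1 then card D else 0))}"
  have "?A \<subseteq> (\<lambda>x. (gf \<alpha>)((l,1) := x)) ` {1,2}"
  proof
    fix T assume "T \<in> ?A"
    hence mf: "marked_filling D T" and ct: "\<And>k. k \<ge> 1 \<Longrightarrow> content D T k = (if k = 1 then card D else 0)"
      by auto
    have r12: "T b = 1 \<or> T b = 2" if "b \<in> D" for b
    proof -
      have t1: "1 \<le> T b" using mf that unfolding marked_filling_def by auto
      have "letter (T b) = 1"
      proof (rule ccontr)
        assume ne: "letter (T b) \<noteq> 1"
        have "1 \<le> letter (T b)" using t1 unfolding letter_def by auto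
        hence "content D T (letter (T b)) = 0" using ct ne by auto
        thus False using content_pos[OF that, of T] by simp
      qed
      thus ?thesis using t1 unfolding letter_def by presburger
    qed
    have "T = (gf \<alpha>)((l,1) := T (l,1))"
    proof
      fix b show "T b = ((gf \<alpha>)((l,1) := T (l,1))) b"
      proof (cases "b = (l,1)")
        case True thus ?thesis by simp
      next
        case nb: False
        show ?thesis
        proof (cases "b \<in> D")
          case False
          have "T b = 0" using mf False unfolding marked_filling_def by blast
          thus ?thesis using False nb unfolding gf_def by simp
        next
          case True
          obtain i j where b: "b = (i,j)" by (cases b)
          have ij: "1 \<le> i" "i \<le> l" "s i \<le> j" "j < s i + \<alpha> ! (i-1)" using True b memD by auto
          show ?thesis
          proof (cases "j = s i")
            case js: True
            have il: "i < l" using nb js s_l ij b by (cases "i = l") auto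
            have d2: "(i+1, j) \<in> D" using F1[OF ij(1) il] js by simp
            have "T (i,j) \<le> T (i+1,j)" using mf True b d2 unfolding marked_filling_def by auto
            moreover have "(i,j)\<in>D \<and> (i+1,j)\<in>D \<and> i \<noteq> i+1 \<and> even (T(i,j)) \<longrightarrow> T(i,j) \<noteq> T(i+1,j)"
              using mf unfolding marked_filling_def by blast
            hence "T (i,j) = 2 \<Longrightarrow> T (i,j) \<noteq> T (i+1,j)" using True b d2 by auto
            ultimately have "T (i,j) = 1" using r12[OF True] r12[OF d2] b by auto
            moreover have "fb \<alpha> b" using js il b unfolding fb_def by simp
            ultimately show ?thesis using True b nb unfolding gf_def by auto
          next
            case jn: False
            hence sj: "s i < j" using ij by simp
            have d2: "(i, j-1) \<in> D" using ij sj memD by auto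
            have "T (i,j-1) \<le> T (i,j)" using mf True b d2 sj unfolding marked_filling_def
              by (metis Suc_diff_1 Suc_eq_plus1 gr_implies_not0 not_gr0)
            moreover have "(i,j-1)\<in>D \<and> (i,j)\<in>D \<and> j-1 \<noteq> j \<and> odd (T(i,j-1)) \<longrightarrow> T(i,j-1) \<noteq> T(i,j)"
              using mf unfolding marked_filling_def by blast
            hence "T (i,j-1) = 1 \<Longrightarrow> T (i,j-1) \<noteq> T (i,j)" using True b d2 sj by auto
            ultimately have "T (i,j) = 2" using r12[OF True] r12[OF d2] b by auto
            moreover have "\<not> fb \<alpha> b" using jn b unfolding fb_def by simp
            ultimately show ?thesis using True b nb unfolding gf_def by auto
          qed
        qed
      qed
    qed
    moreover have "T (l,1) \<in> {1,2}" using r12[OF b0D(1)] by auto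
    ultimately show "T \<in> (\<lambda>x. (gf \<alpha>)((l,1) := x)) ` {1,2}" by blast
  qed
  hence "card ?A \<le> card ((\<lambda>x. (gf \<alpha>)((l,1) := x)) ` {1::nat,2})" by (intro card_mono) auto
  also have "\<dots> \<le> card {1::nat,2}" by (rule card_image_le) simp
  finally show ?thesis by simp
qed

lemma GF_le2: "b \<in> D \<Longrightarrow> b \<noteq> m \<Longrightarrow> v \<in> {1,2} \<Longrightarrow> w \<in> {1,2} \<Longrightarrow> GF \<alpha> m u v w b \<le> 2"
  using GF_val[of b m u v w] by (simp only: split: if_splits) auto

lemma GF_content:
  assumes m: "m \<in> CS \<alpha>" and u: "u \<in> {3,4}" and v: "v \<in> {1,2}" and w: "w \<in> {1,2}"
  shows "content D (GF \<alpha> m u v w) k = (if k = 1 then card D - 1 else if k = 2 then 1 else 0)"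
proof -
  have lt: "letter (GF \<alpha> m u v w b) = (if b = m then 2 else 1)" if "b \<in> D" for b
  proof (cases "b = m")
    case True thus ?thesis using GF_val[OF that, of m u v w] u unfolding letter_def by auto
  next
    case False
    have "GF \<alpha> m u v w b \<le> 2" using GF_le2[OF that False v w] .
    moreover have "GF \<alpha> m u v w b \<ge> 1" using GF_filling[OF m u v w] that unfolding marked_filling_def by auto
    ultimately show ?thesis using False unfolding letter_def by auto
  qed
  have "{b \<in> D. letter (GF \<alpha> m u v w b) = k} = (if k = 1 then D - {m} else if k = 2 then {m} else {})"
  proof (rule set_eqI)
    fix b
    have "b \<in> {b \<in> D. letter (GF \<alpha> m u v w b) = k} \<longleftrightarrow> b \<in> D \<and> (if b = m then 2 else 1) = k"
      using lt[of b] by (cases "b \<in> D") simp_all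
    thus "b \<in> {b \<in> D. letter (GF \<alpha> m u v w b) = k} \<longleftrightarrow> b \<in> (if k = 1 then D - {m} else if k = 2 then {m} else {})"
      using corner(1)[OF m] by (cases "k = 1"; cases "k = 2"; cases "b = m") auto
  qed
  thus ?thesis unfolding content_def using finD corner(1)[OF m] by auto
qed

lemma A2_fin: "finite {T. marked_filling D T \<and> (\<forall>k\<ge>1. content D T k = (if k = 1 then card D - 1 else if k = 2 then 1 else 0))}"
proof -
  let ?A = "{T. marked_filling D T \<and> (\<forall>k\<ge>1. content D T k = (if k = 1 then card D - 1 else if k = 2 then 1 else 0))}"
  have "?A \<subseteq> (\<lambda>f b. if b \<in> D then f b else 0) ` (D \<rightarrow>\<^sub>E {..4::nat})"
  proof
    fix T assume "T \<in> ?A"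
    hence mf: "marked_filling D T" and ct: "\<And>k. k \<ge> 1 \<Longrightarrow> content D T k = (if k = 1 then card D - 1 else if k = 2 then 1 else 0)"
      by auto
    have le4: "T b \<le> 4" if "b \<in> D" for b
    proof -
      have "letter (T b) \<le> 2"
      proof (rule ccontr)
        assume "\<not> letter (T b) \<le> 2"
        hence "content D T (letter (T b)) = 0" using ct[of "letter (T b)"] by auto
        thus False using content_pos[OF that, of T] by simp
      qed
      thus ?thesis unfolding letter_def by auto
    qed
    have "T = (\<lambda>b. if b \<in> D then restrict T D b else 0)"
    proof
      fix b
      have "b \<notin> D \<Longrightarrow> T b = 0" using mf unfolding marked_filling_def by blast
      thus "T b = (if b \<in> D then restrict T D b else 0)" by auto
    qed
    moreover have "restrict T D \<in> D \<rightarrow>\<^sub>E {..4}" using le4 by auto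
    ultimately show "T \<in> (\<lambda>f b. if b \<in> D then f b else 0) ` (D \<rightarrow>\<^sub>E {..4::nat})" by blast
  qed
  moreover have "finite (D \<rightarrow>\<^sub>E {..4::nat})" using finD by (intro finite_PiE) auto
  ultimately show ?thesis using finite_subset by blast
qed

lemma A2_ge: "8 * card (CS \<alpha>) - 4 \<le> card {T. marked_filling D T \<and> (\<forall>k\<ge>1. content D T k = (if k = 1 then card D - 1 else if k = 2 then 1 else 0))}"
proof -
  let ?A = "{T. marked_filling D T \<and> (\<forall>k\<ge>1. content D T k = (if k = 1 then card D - 1 else if k = 2 then 1 else 0))}"
  let ?P = "CS \<alpha> \<times> {3,4::nat} \<times> {1,2::nat} \<times> {1,2::nat}"
  let ?B = "{(l,1::nat)} \<times> {3,4::nat} \<times> {1,2::nat} \<times> {2::nat}"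
  let ?I = "?P - ?B"
  let ?\<Phi> = "\<lambda>(m,u,v,w). GF \<alpha> m u v w"
  have finC: "finite (CS \<alpha>)" using finD by (rule finite_subset[rotated]) (auto simp: CS_def)
  have cP: "card ?P = 8 * card (CS \<alpha>)" by (simp add: card_cartesian_product)
  have cB: "card ?B = 4" by (simp add: card_cartesian_product)
  have "8 * card (CS \<alpha>) - 4 \<le> card ?I" using diff_card_le_card_Diff[of ?B ?P] cP cB by simp
  also have "card ?I \<le> card ?A"
  proof (rule card_inj_on_le)
    show "finite ?A" by (rule A2_fin)
    show "?\<Phi> ` ?I \<subseteq> ?A"
    proof
      fix T assume "T \<in> ?\<Phi> ` ?I"
      then obtain x where x: "x \<in> ?I" and Tx: "T = ?\<Phi> x" by (rule imageE)
      obtain m u v w where xd: "x = (m,u,v,w)" by (cases x) blast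
      have T: "T = GF \<alpha> m u v w" using Tx xd by simp
      have "(m,u,v,w) \<in> ?P" using x xd by blast
      hence "m \<in> CS \<alpha> \<and> u \<in> {3,4} \<and> v \<in> {1,2} \<and> w \<in> {1,2}" by (simp only: mem_Sigma_iff)
      hence a: "m \<in> CS \<alpha>" "u \<in> {3,4}" "v \<in> {1,2}" "w \<in> {1,2}" by blast+
      have "marked_filling D T" using GF_filling[OF a] T by simp
      moreover have "\<forall>k\<ge>1. content D T k = (if k = 1 then card D - 1 else if k = 2 then 1 else 0)"
        using GF_content[OF a] T by simp
      ultimately show "T \<in> ?A" by blast
    qed
    show "inj_on ?\<Phi> ?I"
    proof (rule inj_onI)
      fix x y assume x: "x \<in> ?I" and y: "y \<in> ?I" and e: "?\<Phi> x = ?\<Phi> y"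
      obtain m u v w where xd: "x = (m,u,v,w)" by (cases x) auto
      obtain m' u' v' w' where yd: "y = (m',u',v',w')" by (cases y) auto
      have "(m,u,v,w) \<in> ?P" "(m,u,v,w) \<notin> ?B" using x xd by blast+
      then have P: "(m,u,v,w) \<in> ?P" and B: "(m,u,v,w) \<notin> ?B" by blast+
      have "m \<in> CS \<alpha> \<and> u \<in> {3,4} \<and> v \<in> {1,2} \<and> w \<in> {1,2}" using P by (simp only: mem_Sigma_iff)
      hence a0: "m \<in> CS \<alpha>" "u \<in> {3,4}" "v \<in> {1,2}" "w \<in> {1,2}" by blast+
      have "m = (l,1) \<longrightarrow> w = 1"
      proof
        assume mq: "m = (l,1)"
        show "w = 1"
        proof (rule ccontr)
          assume "w \<noteq> 1"
          hence "w = 2" using a0(4) by blast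
          hence "(m,u,v,w) \<in> ?B" using mq a0(2,3) by blast
          thus False using B by blast
        qed
      qed
      note a = a0 this
      have "(m',u',v',w') \<in> ?P" "(m',u',v',w') \<notin> ?B" using y yd by blast+
      then have P': "(m',u',v',w') \<in> ?P" and B': "(m',u',v',w') \<notin> ?B" by blast+
      have "m' \<in> CS \<alpha> \<and> u' \<in> {3,4} \<and> v' \<in> {1,2} \<and> w' \<in> {1,2}" using P' by (simp only: mem_Sigma_iff)
      hence a0': "m' \<in> CS \<alpha>" "u' \<in> {3,4}" "v' \<in> {1,2}" "w' \<in> {1,2}" by blast+
      have "m' = (l,1) \<longrightarrow> w' = 1"
      proof
        assume mq: "m' = (l,1)"
        show "w' = 1"
        proof (rule ccontr)
          assume "w' \<noteq> 1"
          hence "w' = 2" using a0'(4) by blast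
          hence "(m',u',v',w') \<in> ?B" using mq a0'(2,3) by blast
          thus False using B' by blast
        qed
      qed
      note a' = a0' this
      have E: "GF \<alpha> m u v w b = GF \<alpha> m' u' v' w' b" for b using e xd yd by simp
      have mm: "m = m'"
      proof (rule ccontr)
        assume "m \<noteq> m'"
        hence "GF \<alpha> m' u' v' w' m \<le> 2" using GF_le2[OF corner(1)[OF a(1)] _ a'(3,4)] by auto
        moreover have "GF \<alpha> m u v w m = u" using GF_val[OF corner(1)[OF a(1)]] by simp
        ultimately show False using E[of m] a(2) by auto
      qed
      have uu: "u = u'" using E[of m] GF_val[OF corner(1)[OF a(1)]] mm by simp
      have vbm: "(fst m - 1, snd m) \<noteq> m" using corner[OF a(1)] by (cases m) auto
      have vv: "v = v'" using E[of "(fst m - 1, snd m)"] GF_val[OF corner(6)[OF a(1)]] mm vbm by simp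
      have ww: "w = w'"
      proof (cases "m = (l,1)")
        case True thus ?thesis using a(5) a'(5) mm by simp
      next
        case False
        have "(fst m - 1, snd m) \<noteq> (l,1)" using corner[OF a(1)] by auto
        thus ?thesis using E[of "(l,1)"] GF_val[OF b0D(1)] mm False by auto
      qed
      show "x = y" using xd yd mm uu vv ww by simp
    qed
  qed
  finally show ?thesis .
qed

end

lemma pc_pos:
  fixes la :: "nat list"
  assumes "f \<in> {f. length f = length la \<and> (\<forall>i\<in>set f. 1 \<le> i) \<and>
      (\<forall>k\<ge>1. (\<Sum>j\<in>{j. j < length la \<and> f ! j = k}. la ! j) = a k)}" "j < length la"
  shows "1 \<le> f ! j" "la ! j \<le> a (f ! j)"
proof -
  have L: "length f = length la" and p: "\<forall>i\<in>set f. 1 \<le> i"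
    and s: "\<And>k. k \<ge> 1 \<Longrightarrow> (\<Sum>j\<in>{j. j < length la \<and> f ! j = k}. la ! j) = a k" using assms(1) by auto
  show f1: "1 \<le> f ! j" using p assms(2) L nth_mem by metis
  have "la ! j \<le> (\<Sum>j\<in>{j'. j' < length la \<and> f ! j' = f ! j}. la ! j)"
    using assms(2) by (intro member_le_sum[where f = "(!) la"]) auto
  thus "la ! j \<le> a (f ! j)" using s[OF f1] by simp
qed

lemma pcoeff_bound:
  assumes la: "0 \<notin> set la" and n: "1 \<le> n"
  shows "pcoeff la (\<lambda>k. if k = 1 then n - 1 else if k = 2 then 1 else 0) \<le> n * pcoeff la (\<lambda>k. if k = 1 then n else 0)"
proof -
  define a1 where "a1 = (\<lambda>k::nat. if k = 1 then n else 0)"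
  define a2 where "a2 = (\<lambda>k::nat. if k = 1 then n - 1 else if k = 2 then 1 else 0)"
  define L where "L = length la"
  let ?S = "\<lambda>a. {f. length f = length la \<and> (\<forall>i\<in>set f. 1 \<le> i) \<and>
      (\<forall>k\<ge>1. (\<Sum>j\<in>{j. j < length la \<and> f ! j = k}. la ! j) = a k)}"
  have lapos: "1 \<le> la ! j" if "j < L" for j
    using la that unfolding L_def by (metis less_one not_le nth_mem)
  show ?thesis
  proof (cases "?S a2 = {}")
    case True
    have "pcoeff la a2 = card (?S a2)" unfolding pcoeff_def by (rule refl)
    hence "pcoeff la a2 = 0" using True by (simp only: card.empty)
    thus ?thesis unfolding a2_def by simp
  next
    case False
    then obtain f0 where f0: "f0 \<in> ?S a2" by blast
    have f0v: "f0 ! j = 1 \<or> f0 ! j = 2" if "j < L" for j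
      using pc_pos[OF f0, of j] lapos[OF that] that unfolding L_def a2_def
      by (auto split: if_splits)
    have s0: "\<And>k. k \<ge> 1 \<Longrightarrow> (\<Sum>j\<in>{j. j < L \<and> f0 ! j = k}. la ! j) = a2 k"
      using f0 unfolding L_def by auto
    have "{..<L} = {j. j < L \<and> f0 ! j = 1} \<union> {j. j < L \<and> f0 ! j = 2}" using f0v by auto
    hence "(\<Sum>j<L. la ! j) = (\<Sum>j\<in>{j. j < L \<and> f0 ! j = 1}. la ! j) + (\<Sum>j\<in>{j. j < L \<and> f0 ! j = 2}. la ! j)"
      by (simp add: sum.union_disjoint[symmetric] disjoint_iff)
    also have "\<dots> = n" using s0[of 1] s0[of 2] n unfolding a2_def by simp
    finally have sumn: "(\<Sum>j<L. la ! j) = n" .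
    have Ln: "L \<le> n"
    proof -
      have "L = (\<Sum>j<L. (1::nat))" by simp
      also have "\<dots> \<le> (\<Sum>j<L. la ! j)" by (rule sum_mono) (use lapos in auto)
      finally show ?thesis using sumn by simp
    qed
    have A1: "?S a1 = {replicate L 1}"
    proof
      show "?S a1 \<subseteq> {replicate L 1}"
      proof
        fix f assume f: "f \<in> ?S a1"
        have "f ! j = 1" if "j < L" for j
          using pc_pos[OF f, of j] lapos[OF that] that unfolding L_def a1_def
          by (auto split: if_splits)
        moreover have "length f = L" using f unfolding L_def by auto
        ultimately have "f = replicate L 1" by (intro nth_equalityI) auto
        thus "f \<in> {replicate L 1}" by simp
      qed
      have "{j. j < L \<and> replicate L 1 ! j = k} = (if k = 1 then {..<L} else {})" for k :: nat
        by auto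
      thus "{replicate L 1} \<subseteq> ?S a1" using sumn unfolding L_def a1_def by auto
    qed
    have A2: "?S a2 \<subseteq> (\<lambda>j. (replicate L (1::nat))[j := 2]) ` {..<L}"
    proof
      fix f assume f: "f \<in> ?S a2"
      have fv: "f ! j = 1 \<or> f ! j = 2" if "j < L" for j
        using pc_pos[OF f, of j] lapos[OF that] that unfolding L_def a2_def
        by (auto split: if_splits)
      let ?J = "{j. j < L \<and> f ! j = 2}"
      have sJ: "(\<Sum>j\<in>?J. la ! j) = 1" using f unfolding L_def a2_def by auto
      have finJ: "finite ?J" by simp
      have "card ?J = (\<Sum>j\<in>?J. (1::nat))" by simp
      also have "\<dots> \<le> (\<Sum>j\<in>?J. la ! j)" by (rule sum_mono) (use lapos in auto)
      finally have c1: "card ?J \<le> 1" using sJ by simp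
      have "?J \<noteq> {}"
      proof
        assume "?J = {}"
        hence "(\<Sum>j\<in>?J. la ! j) = 0" by (simp only: sum.empty)
        thus False using sJ by simp
      qed
      hence "card ?J > 0" using finJ card_gt_0_iff by blast
      hence "card ?J = 1" using c1 by linarith
      then obtain j0 where J: "?J = {j0}" by (rule card_1_singletonE)
      have j0: "j0 < L" using J by auto
      have "length f = L" using f unfolding L_def by auto
      moreover have "f ! i = ((replicate L (1::nat))[j0 := 2]) ! i" if "i < L" for i
      proof (cases "i = j0")
        case True thus ?thesis using J that by auto
      next
        case False
        hence "i \<notin> ?J" using J by auto
        thus ?thesis using fv[OF that] that False by auto
      qed
      ultimately have "f = (replicate L (1::nat))[j0 := 2]" by (intro nth_equalityI) auto
      thus "f \<in> (\<lambda>j. (replicate L (1::nat))[j := 2]) ` {..<L}" using j0 by blast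
    qed
    have "card (?S a2) \<le> card ((\<lambda>j. (replicate L (1::nat))[j := 2]) ` {..<L})"
      by (rule card_mono[OF _ A2]) simp
    also have "\<dots> \<le> L" using card_image_le[of "{..<L}"] by simp
    finally have "card (?S a2) \<le> n * card (?S a1)" using Ln A1 by simp
    hence "pcoeff la a2 \<le> n * pcoeff la a1" unfolding pcoeff_def .
    thus ?thesis unfolding a1_def a2_def .
  qed
qed

theorem mainTheorem15:
  fixes \<alpha> :: "nat list" and n :: nat
  assumes "is_composition \<alpha>"
    and "n = card (ribbon \<alpha>)"
    and "\<alpha> ! 0 = 1"
    and "real (corners (ribbon \<alpha>)) > 1/2 + real n / 4"
  shows "\<not> p_positive (rcoeff (ribbon \<alpha>))"
proof
  assume pp: "p_positive (rcoeff (ribbon \<alpha>))"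
  note comp = assms(1)
  let ?D = "ribbon \<alpha>"
  define a1 where "a1 = (\<lambda>k::nat. if k = 1 then n else 0)"
  define a2 where "a2 = (\<lambda>k::nat. if k = 1 then n - 1 else if k = 2 then 1 else 0)"
  obtain c where fin: "finite {la. c la \<noteq> 0}" and part: "\<And>la. c la \<noteq> 0 \<Longrightarrow> is_partition la"
    and nn: "\<And>la. 0 \<le> c la"
    and eq: "\<And>a. a 0 = 0 \<and> finite {k. a k \<noteq> 0} \<Longrightarrow>
         real (rcoeff ?D a) = (\<Sum>la\<in>{la. c la \<noteq> 0}. c la * real (pcoeff la a))"
    using pp unfolding p_positive_def by blast
  have cc: "corners ?D = card (CS \<alpha>)" unfolding corners_def CS_def by simp
  have cpos: "card (CS \<alpha>) \<ge> 1" using assms(4) cc by simp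
  hence "CS \<alpha> \<noteq> {}" by auto
  then obtain m where "m \<in> CS \<alpha>" by blast
  hence "m \<in> ?D" using corner(1)[OF comp] by blast
  hence n1: "1 \<le> n" using finD[OF comp] assms(2) card_gt_0_iff[of ?D] by auto
  have e1: "real (rcoeff ?D a1) = (\<Sum>la\<in>{la. c la \<noteq> 0}. c la * real (pcoeff la a1))"
    by (rule eq) (auto simp: a1_def intro: finite_subset[of _ "{1}"])
  have e2: "real (rcoeff ?D a2) = (\<Sum>la\<in>{la. c la \<noteq> 0}. c la * real (pcoeff la a2))"
    by (rule eq) (auto simp: a2_def intro: finite_subset[of _ "{1,2}"])
  have "(\<Sum>la\<in>{la. c la \<noteq> 0}. c la * real (pcoeff la a2)) \<le> (\<Sum>la\<in>{la. c la \<noteq> 0}. c la * (real n * real (pcoeff la a1)))"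
  proof (rule sum_mono)
    fix la assume "la \<in> {la. c la \<noteq> 0}"
    hence "0 \<notin> set la" using part unfolding is_partition_def by auto
    hence "pcoeff la a2 \<le> n * pcoeff la a1" using pcoeff_bound[OF _ n1] unfolding a1_def a2_def by blast
    hence "real (pcoeff la a2) \<le> real n * real (pcoeff la a1)" by (metis of_nat_le_iff of_nat_mult)
    thus "c la * real (pcoeff la a2) \<le> c la * (real n * real (pcoeff la a1))" using nn[of la] by (rule mult_left_mono)
  qed
  also have "\<dots> = real n * (\<Sum>la\<in>{la. c la \<noteq> 0}. c la * real (pcoeff la a1))"
    by (simp add: sum_distrib_left algebra_simps)
  finally have X: "real (rcoeff ?D a2) \<le> real n * real (rcoeff ?D a1)" using e1 e2 by simp
  have r1: "rcoeff ?D a1 \<le> 2" unfolding rcoeff_def a1_def assms(2) by (rule A1_le[OF comp])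
  have r2: "8 * card (CS \<alpha>) - 4 \<le> rcoeff ?D a2" unfolding rcoeff_def a2_def assms(2) by (rule A2_ge[OF comp])
  have "real n * real (rcoeff ?D a1) \<le> real n * 2"
    by (rule mult_left_mono) (use r1 in simp_all)
  moreover have "real (8 * card (CS \<alpha>) - 4) \<le> real (rcoeff ?D a2)" using r2 by (rule of_nat_mono)
  moreover have "real (8 * card (CS \<alpha>) - 4) = 8 * real (card (CS \<alpha>)) - 4" using cpos by simp
  moreover have "real (card (CS \<alpha>)) > 1/2 + real n / 4" using assms(4) cc by simp
  ultimately show False using X by linarith
qed

end
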